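(* Let $G$ be a group and $\kappa$ an infinite cardinal with $\kappa<|G|$. Then the ballean $(G,\mathcal E_{[G]^{<\kappa}})$ is not normal.
   Context: A ballean is a pair $(X,\mathcal E_X)$ where $X$ is a set and $\mathcal E_X$ is a family of subsets of $X\times X$ (entourages) such that: each $E\in\mathcal E_X$ contains the diagonal; for any $E,F\in\mathcal E_X$ there is $D\in\mathcal E_X$ with $E\circ F^{-1}\subset D$; and $\bigcup\mathcal E_X=X\times X$. For $E\in\mathcal E_X$, $x\in X$, $A\subset X$: $E[x]=\{y:(x,y)\in E\}$, $E[A]=\bigcup_{a\in A}E[a]$. $B\subset X$ is bounded if $B\subset E[x]$ for some $E\in\mathcal E_X$, $x\in X$; $\mathcal B_X$ is the family of bounded sets. Sets $A,B$ are asymptotically disjoint if $E[A]\cap E[B]\in\mathcal B_X$ for all $E\in\mathcal E_X$; $U$ is an asymptotic neighborhood of $A$ if $E[A]\setminus U\in\mathcal B_X$ for all $E$; $X$ is normal if any two asymptotically disjoint sets have disjoint asymptotic neighborhoods. For a group $G$ and infinite cardinal $\kappa\le|G|$, $[G]^{<\kappa}$ is the family of subsets of $G$ of cardinality $<\kappa$, and $\mathcal E_{[G]^{<\kappa}}$ is the ball structure on $G$ consisting of the entourages $E_I=\{(x,y)\in G\times G:y\in\{x\}\cup Ix\}$, $I\in[G]^{<\kappa}$. *)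

theory Defs
  imports "HOL-Algebra.Group"
begin

definition ballean :: "'a set \<Rightarrow> ('a \<times> 'a) set set \<Rightarrow> bool" where
  "ballean X Ent \<longleftrightarrow>
     (\<forall>E\<in>Ent. E \<subseteq> X \<times> X \<and> Id_on X \<subseteq> E) \<and>
     (\<forall>E\<in>Ent. \<forall>F\<in>Ent. \<exists>D\<in>Ent. E O F\<inverse> \<subseteq> D) \<and>
     \<Union>Ent = X \<times> X"

definition bounded_in :: "'a set \<Rightarrow> ('a \<times> 'a) set set \<Rightarrow> 'a set \<Rightarrow> bool" where
  "bounded_in X Ent B \<longleftrightarrow> (\<exists>E\<in>Ent. \<exists>x\<in>X. B \<subseteq> E `` {x})"

definition asymp_disjoint :: "'a set \<Rightarrow> ('a \<times> 'a) set set \<Rightarrow> 'a set \<Rightarrow> 'a set \<Rightarrow> bool" where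
  "asymp_disjoint X Ent A B \<longleftrightarrow> (\<forall>E\<in>Ent. bounded_in X Ent (E `` A \<inter> E `` B))"

definition asymp_nbhd :: "'a set \<Rightarrow> ('a \<times> 'a) set set \<Rightarrow> 'a set \<Rightarrow> 'a set \<Rightarrow> bool" where
  "asymp_nbhd X Ent U A \<longleftrightarrow> (\<forall>E\<in>Ent. bounded_in X Ent (E `` A - U))"

definition normal_ballean :: "'a set \<Rightarrow> ('a \<times> 'a) set set \<Rightarrow> bool" where
  "normal_ballean X Ent \<longleftrightarrow>
     (\<forall>A B. A \<subseteq> X \<longrightarrow> B \<subseteq> X \<longrightarrow> asymp_disjoint X Ent A B \<longrightarrow>
        (\<exists>U V. U \<subseteq> X \<and> V \<subseteq> X \<and> U \<inter> V = {} \<and>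
               asymp_nbhd X Ent U A \<and> asymp_nbhd X Ent V B))"

definition entourage_I :: "('a, 'b) monoid_scheme \<Rightarrow> 'a set \<Rightarrow> ('a \<times> 'a) set" where
  "entourage_I G I = {(x, y). x \<in> carrier G \<and> y \<in> carrier G \<and>
                        (y = x \<or> (\<exists>i\<in>I. y = i \<otimes>\<^bsub>G\<^esub> x))}"

text \<open>The ball structure E_{[G]^{<\<kappa>}}, where the cardinal \<kappa> is given as
  the cardinality of a set K: I ranges over subsets of G with |I| < |K|.\<close>

definition small_ent :: "('a, 'b) monoid_scheme \<Rightarrow> 'k set \<Rightarrow> ('a \<times> 'a) set set" where
  "small_ent G K = {entourage_I G I | I. I \<subseteq> carrier G \<and> (card_of I, card_of K) \<in> ordLess}"

end

theory Submission
  imports Defs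
begin

unbundle cardinal_syntax

lemma fin_less_inf: "finite A \<Longrightarrow> infinite C \<Longrightarrow> |A| <o |C|"
  using finite_ordLess_infinite[of "|A|" "|C|"] card_of_Well_order Field_card_of by metis

lemma times_less_inf: assumes "infinite C" "|A| <o |C|" shows "|A \<times> A| <o |C|"
proof (cases "finite A")
  case True then have "finite (A \<times> A)" by simp
  then show ?thesis using fin_less_inf assms(1) by blast
next
  case False
  then have "|A \<times> A| =o |A|" by (rule card_of_Times_same_infinite)
  then show ?thesis using assms(2) ordIso_ordLess_trans by blast
qed

lemma times_less_inf2: fixes A B :: "'a set" assumes "infinite C" "|A| <o |C|" "|B| <o |C|" shows "|A \<times> B| <o |C|"
proof -
  have "|A \<union> B| <o |C|" using card_of_Un_ordLess_infinite assms by blast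
  then have "|(A\<union>B) \<times> (A\<union>B)| <o |C|" using times_less_inf assms(1) by blast
  moreover have "|A \<times> B| \<le>o |(A\<union>B) \<times> (A\<union>B)|" by (rule card_of_mono1) auto
  ultimately show ?thesis using ordLeq_ordLess_trans by blast
qed

lemma times_leq_inf: assumes "infinite C" "|A| \<le>o |C|" "|B| \<le>o |C|" shows "|A \<times> B| \<le>o |C|"
  apply (rule card_of_Times_ordLeq_infinite_Field)
  using assms by (auto simp: Field_card_of card_of_Card_order card_of_card_order_on)

lemma un_leq_inf: assumes "infinite C" "|A| \<le>o |C|" "|B| \<le>o |C|" shows "|A \<union> B| \<le>o |C|"
  apply (rule card_of_Un_ordLeq_infinite_Field)
  using assms by (auto simp: Field_card_of card_of_Card_order card_of_card_order_on)

lemma ent_in: "I \<subseteq> carrier G \<Longrightarrow> |I| <o |K| \<Longrightarrow> entourage_I G I \<in> small_ent G K"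
  unfolding small_ent_def by blast

lemma bounded_small:
  fixes G (structure)
  assumes "group G" "infinite K" "B \<subseteq> carrier G" "|B| <o |K|"
  shows "bounded_in (carrier G) (small_ent G K) B"
proof -
  interpret group G by fact
  have "B \<subseteq> entourage_I G B `` {\<one>}"
    using assms(3) unfolding entourage_I_def by (auto, metis r_one subsetD)
  then show ?thesis unfolding bounded_in_def using ent_in[OF assms(3,4)] by auto
qed

lemma small_bounded:
  fixes G (structure)
  assumes "group G" "infinite K" "bounded_in (carrier G) (small_ent G K) B"
  shows "|B| <o |K|"
proof -
  interpret group G by fact
  obtain I x where I: "|I| <o |K|" and B: "B \<subseteq> entourage_I G I `` {x}"
    using assms(3) unfolding bounded_in_def small_ent_def by blast
  have "B \<subseteq> {x} \<union> (\<lambda>i. i \<otimes> x) ` I" using B by (auto simp: entourage_I_def)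
  moreover have "|{x} \<union> (\<lambda>i. i \<otimes> x) ` I| <o |K|"
    apply (rule card_of_Un_ordLess_infinite[OF assms(2)])
    using fin_less_inf assms(2) apply blast
    using card_of_image I ordLeq_ordLess_trans by blast
  ultimately show ?thesis using card_of_mono1 ordLeq_ordLess_trans by blast
qed

lemma exists_subgroup:
  fixes G (structure)
  assumes "group G" "infinite K" "|K| <o |carrier G|"
  shows "\<exists>H. subgroup H G \<and> |K| \<le>o |H| \<and> |H| \<le>o |K|"
proof -
  interpret group G by fact
  have "|K| \<le>o |carrier G|" using assms(3) ordLess_imp_ordLeq by blast
  then obtain f where f: "inj_on f K" "f ` K \<subseteq> carrier G" unfolding card_of_ordLeq[symmetric] by blast
  define S where "S = rec_nat (insert \<one> (f ` K)) (\<lambda>n Y. Y \<union> (\<lambda>p. fst p \<otimes> snd p) ` (Y \<times> Y) \<union> (\<lambda>a. inv a) ` Y)"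
  have S0: "S 0 = insert \<one> (f`K)" and SS: "\<And>n. S (Suc n) = S n \<union> (\<lambda>p. fst p \<otimes> snd p) ` (S n \<times> S n) \<union> (\<lambda>a. inv a) ` S n"
    by (simp_all add: S_def)
  have Sc: "S n \<subseteq> carrier G" for n
  proof (induction n)
    case 0 then show ?case using f(2) unfolding S0 by simp
  next
    case (Suc n) then show ?case unfolding SS by (auto intro!: m_closed)
  qed
  have Kne: "K \<noteq> {}" using assms(2) by auto
  have Sk: "|S n| \<le>o |K|" for n
  proof (induction n)
    case 0
    have a: "|f`K| \<le>o |K|" by (rule card_of_image)
    have b: "|{\<one>}| \<le>o |K|" using card_of_singl_ordLeq[OF Kne] .
    have "insert \<one> (f`K) = {\<one>} \<union> f`K" by simp
    then show ?case unfolding S0 using un_leq_inf[OF assms(2) b a] by simp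
  next
    case (Suc n)
    have a: "|(\<lambda>p. fst p \<otimes> snd p) ` (S n \<times> S n)| \<le>o |K|"
      by (rule ordLeq_transitive[OF card_of_image times_leq_inf[OF assms(2) Suc.IH Suc.IH]])
    have b: "|(\<lambda>a. inv a) ` S n| \<le>o |K|" by (rule ordLeq_transitive[OF card_of_image Suc.IH])
    show ?case unfolding SS by (intro un_leq_inf[OF assms(2)] Suc.IH a b)
  qed
  have Sstep: "S n \<subseteq> S (Suc n)" for n unfolding SS by blast
  have Smono: "m \<le> n \<Longrightarrow> S m \<subseteq> S n" for m n
    by (rule lift_Suc_mono_le[of S, OF Sstep])
  define H where "H = (\<Union>n. S n)"
  have "|H| \<le>o |K|" unfolding H_def
    apply (rule card_of_UNION_ordLeq_infinite[OF assms(2)])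
    using assms(2) infinite_iff_card_of_nat Sk by auto
  moreover have "|K| \<le>o |H|"
  proof -
    have "f ` K \<subseteq> H" unfolding H_def using S0 by auto
    then show ?thesis unfolding card_of_ordLeq[symmetric] using f(1) by blast
  qed
  moreover have "subgroup H G"
  proof (rule subgroupI)
    show "H \<subseteq> carrier G" using Sc unfolding H_def by blast
    show "H \<noteq> {}" using S0 unfolding H_def by blast
    show "inv a \<in> H" if a: "a \<in> H" for a
    proof -
      obtain n where "a \<in> S n" using a unfolding H_def by blast
      then have "inv a \<in> S (Suc n)" unfolding SS by blast
      then show ?thesis unfolding H_def by blast
    qed
    show "a \<otimes> b \<in> H" if ab: "a \<in> H" "b \<in> H" for a b
    proof -
      obtain m n where mn: "a \<in> S m" "b \<in> S n" using ab unfolding H_def by blast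
      have "S m \<subseteq> S (max m n)" "S n \<subseteq> S (max m n)" using Smono by simp_all
      then have "(a, b) \<in> S (max m n) \<times> S (max m n)" using mn by blast
      then have "a \<otimes> b \<in> S (Suc (max m n))" unfolding SS by force
      then show ?thesis unfolding H_def by blast
    qed
  qed
  ultimately show ?thesis by blast
qed

locale dcs = group G for G (structure) +
  fixes H assumes subH: "subgroup H G"
begin

lemma Hc[simp]: "a \<in> H \<Longrightarrow> a \<in> carrier G" using subgroup.subset[OF subH] by (rule subsetD)
lemma Hm[simp]: "a \<in> H \<Longrightarrow> b \<in> H \<Longrightarrow> a \<otimes> b \<in> H" by (rule subgroup.m_closed[OF subH])
lemma Hi[simp]: "a \<in> H \<Longrightarrow> inv a \<in> H" by (rule subgroup.m_inv_closed[OF subH])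
lemma H1[simp]: "\<one> \<in> H" by (rule subgroup.one_closed[OF subH])

lemma cl1[simp]: "x \<in> carrier G \<Longrightarrow> y \<in> carrier G \<Longrightarrow> inv x \<otimes> (x \<otimes> y) = y"
  by (simp add: m_assoc[symmetric])
lemma cl2[simp]: "x \<in> carrier G \<Longrightarrow> y \<in> carrier G \<Longrightarrow> x \<otimes> (inv x \<otimes> y) = y"
  by (simp add: m_assoc[symmetric])

lemma coset_mem:
  assumes "a \<in> carrier G" "x \<in> carrier G" "y \<in> carrier G" "inv x \<otimes> y \<in> H"
  shows "a \<otimes> y \<in> H \<longleftrightarrow> a \<otimes> x \<in> H"
proof
  assume "a \<otimes> y \<in> H"
  moreover have "a \<otimes> x = (a \<otimes> y) \<otimes> inv (inv x \<otimes> y)" using assms by (simp add: inv_mult_group m_assoc)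
  ultimately show "a \<otimes> x \<in> H" using assms by simp
next
  assume "a \<otimes> x \<in> H"
  moreover have "a \<otimes> y = (a \<otimes> x) \<otimes> (inv x \<otimes> y)" using assms by (simp add: m_assoc)
  ultimately show "a \<otimes> y \<in> H" using assms by simp
qed

lemma trans_mem:
  assumes "a \<in> carrier G" "b \<in> carrier G" "c \<in> carrier G" "a \<otimes> b \<in> H" "a \<otimes> c \<in> H"
  shows "inv b \<otimes> c \<in> H"
proof -
  have "inv b \<otimes> c = inv (a \<otimes> b) \<otimes> (a \<otimes> c)" using assms by (simp add: inv_mult_group m_assoc)
  then show ?thesis using assms by simp
qed

definition dc where "dc x = {h \<otimes> x \<otimes> k | h k. h \<in> H \<and> k \<in> H}"

lemma dcI: "h \<in> H \<Longrightarrow> k \<in> H \<Longrightarrow> z = h \<otimes> x \<otimes> k \<Longrightarrow> z \<in> dc x"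
  unfolding dc_def by blast

lemma dc_self: "x \<in> carrier G \<Longrightarrow> x \<in> dc x"
  unfolding dc_def by (rule CollectI, rule exI[of _ \<one>], rule exI[of _ \<one>]) simp

lemma dc_carrier: "x \<in> carrier G \<Longrightarrow> y \<in> dc x \<Longrightarrow> y \<in> carrier G"
  unfolding dc_def by auto

lemma dc_trans: "x \<in> carrier G \<Longrightarrow> y \<in> dc x \<Longrightarrow> z \<in> dc y \<Longrightarrow> z \<in> dc x"
proof -
  assume x: "x \<in> carrier G" and "y \<in> dc x" "z \<in> dc y"
  then obtain h k h' k' where hk: "h\<in>H" "k\<in>H" "h'\<in>H" "k'\<in>H" "y = h \<otimes> x \<otimes> k" "z = h' \<otimes> y \<otimes> k'"
    unfolding dc_def by blast
  then have "z = (h' \<otimes> h) \<otimes> x \<otimes> (k \<otimes> k')" using x by (simp add: m_assoc)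
  then show ?thesis using hk by (intro dcI[of "h' \<otimes> h" "k \<otimes> k'"]) simp_all
qed

lemma dc_sym: "x \<in> carrier G \<Longrightarrow> y \<in> dc x \<Longrightarrow> x \<in> dc y"
proof -
  assume x: "x \<in> carrier G" and "y \<in> dc x"
  then obtain h k where hk: "h\<in>H" "k\<in>H" "y = h \<otimes> x \<otimes> k" unfolding dc_def by blast
  then have "x = inv h \<otimes> y \<otimes> inv k" using x by (simp add: m_assoc)
  then show ?thesis using hk by (intro dcI[of "inv h" "inv k"]) simp_all
qed

lemma dc_eq: assumes "x \<in> carrier G" "y \<in> dc x" shows "dc y = dc x"
proof
  have y: "y \<in> carrier G" using assms dc_carrier by blast
  show "dc y \<subseteq> dc x" using assms dc_trans by blast
  show "dc x \<subseteq> dc y" using assms y dc_trans dc_sym by blast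
qed

definition rep where "rep x = (SOME y. y \<in> dc x)"

lemma rep_dc: "x \<in> carrier G \<Longrightarrow> rep x \<in> dc x"
  unfolding rep_def by (metis dc_self someI)
lemma rep_carrier[simp]: "x \<in> carrier G \<Longrightarrow> rep x \<in> carrier G"
  using rep_dc dc_carrier by blast
lemma rep_eq: "x \<in> carrier G \<Longrightarrow> y \<in> dc x \<Longrightarrow> rep y = rep x"
  unfolding rep_def using dc_eq by simp
lemma rep_rep: "x \<in> carrier G \<Longrightarrow> rep (rep x) = rep x"
  using rep_eq rep_dc by blast
lemma x_dc_rep: "x \<in> carrier G \<Longrightarrow> x \<in> dc (rep x)"
  using dc_sym rep_dc by blast

definition ch where "ch x = (SOME h. h \<in> H \<and> inv (h \<otimes> rep x) \<otimes> x \<in> H)"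

lemma ch_prop: assumes x: "x \<in> carrier G" shows "ch x \<in> H \<and> inv (ch x \<otimes> rep x) \<otimes> x \<in> H"
proof -
  define r where "r = rep x"
  have r: "r \<in> carrier G" using x r_def by simp
  obtain h k where hk: "h\<in>H" "k\<in>H" "x = h \<otimes> r \<otimes> k" using x_dc_rep[OF x] unfolding dc_def r_def by blast
  have "inv (h \<otimes> r) \<otimes> (h \<otimes> r \<otimes> k) = k" using hk r cl1[of "h \<otimes> r" k] by simp
  then have "inv (h \<otimes> r) \<otimes> x \<in> H" using hk by simp
  then have "\<exists>h. h \<in> H \<and> inv (h \<otimes> rep x) \<otimes> x \<in> H" using hk(1) unfolding r_def by blast
  then show ?thesis unfolding ch_def by (rule someI_ex)
qed

lemma rep_inv: assumes "x \<in> carrier G" "y \<in> carrier G" "inv x \<otimes> y \<in> H" shows "rep y = rep x"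
proof -
  have "y = \<one> \<otimes> x \<otimes> (inv x \<otimes> y)" using assms by simp
  then have "y \<in> dc x" using assms by (intro dcI[of "\<one>" "inv x \<otimes> y"]) simp_all
  then show ?thesis using rep_eq assms by blast
qed

lemma ch_inv: assumes "x \<in> carrier G" "y \<in> carrier G" "inv x \<otimes> y \<in> H" shows "ch y = ch x"
proof -
  have r: "rep y = rep x" using rep_inv assms by blast
  have "(\<lambda>h. h \<in> H \<and> inv (h \<otimes> rep y) \<otimes> y \<in> H) = (\<lambda>h. h \<in> H \<and> inv (h \<otimes> rep x) \<otimes> x \<in> H)"
  proof
    fix h show "(h \<in> H \<and> inv (h \<otimes> rep y) \<otimes> y \<in> H) = (h \<in> H \<and> inv (h \<otimes> rep x) \<otimes> x \<in> H)"
    proof (cases "h \<in> H")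
      case True
      have "inv (h \<otimes> rep x) \<in> carrier G" using True assms by simp
      then show ?thesis using coset_mem[OF _ assms] r True by simp
    qed simp
  qed
  then show ?thesis unfolding ch_def by simp
qed

definition rho where "rho x = ch x \<otimes> rep x \<otimes> ch x"

lemma rho_carrier[simp]: "x \<in> carrier G \<Longrightarrow> rho x \<in> carrier G"
  unfolding rho_def using ch_prop by simp

lemma rho_inv: assumes "x \<in> carrier G" "y \<in> carrier G" "inv x \<otimes> y \<in> H" shows "rho y = rho x"
  unfolding rho_def using rep_inv[OF assms] ch_inv[OF assms] by simp

lemma rho_lc: assumes x: "x \<in> carrier G" shows "inv x \<otimes> rho x \<in> H"
proof -
  define c where "c = ch x"
  define r where "r = rep x"
  have c: "c \<in> H" "inv (c \<otimes> r) \<otimes> x \<in> H" using ch_prop[OF x] c_def r_def by auto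
  have r: "r \<in> carrier G" using x r_def by simp
  have "inv x \<otimes> rho x = inv (inv (c \<otimes> r) \<otimes> x) \<otimes> c"
    unfolding rho_def c_def[symmetric] r_def[symmetric] using c r x by (simp add: inv_mult_group m_assoc)
  then show ?thesis using c by simp
qed

definition BB where "BB = rho ` carrier G"
definition HB where "HB = {h \<otimes> b | h b. h \<in> H \<and> b \<in> BB}"

lemma HBI: "h \<in> H \<Longrightarrow> b \<in> BB \<Longrightarrow> y = h \<otimes> b \<Longrightarrow> y \<in> HB"
  unfolding HB_def by blast

lemma BB_carrier: "BB \<subseteq> carrier G" unfolding BB_def by auto

lemma transv: assumes "b \<in> BB" "b' \<in> BB" "inv b \<otimes> b' \<in> H" shows "b = b'"
proof -
  obtain x y where xy: "x \<in> carrier G" "y \<in> carrier G" "b = rho x" "b' = rho y" using assms unfolding BB_def by blast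
  have bc: "b \<in> carrier G" "b' \<in> carrier G" using xy by simp_all
  have eq: "inv x \<otimes> y = (inv x \<otimes> b) \<otimes> (inv b \<otimes> b') \<otimes> inv (inv y \<otimes> b')"
    using xy(1,2) bc by (simp add: inv_mult_group m_assoc)
  have h1: "inv x \<otimes> b \<in> H" using rho_lc[OF xy(1)] xy(3) by simp
  have h2: "inv y \<otimes> b' \<in> H" using rho_lc[OF xy(2)] xy(4) by simp
  have "inv x \<otimes> y \<in> H" unfolding eq using h1 h2 assms(3) by simp
  then show ?thesis using rho_inv[OF xy(1,2)] xy(3,4) by simp
qed

lemma big_D:
  assumes K: "infinite K" "|K| \<le>o |H|" and g: "g \<in> carrier G"
  shows "\<exists>D. D \<subseteq> {y \<in> carrier G. inv g \<otimes> y \<in> H} \<and> D \<subseteq> HB \<and> |K| \<le>o |D|"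
proof -
  define s where "s = rep g"
  have s: "s \<in> carrier G" using g s_def by simp
  obtain h0 k0 where h0: "h0 \<in> H" "k0 \<in> H" "g = h0 \<otimes> s \<otimes> k0"
    using x_dc_rep[OF g] unfolding dc_def s_def by blast
  have rs: "rep s = s" using rep_rep g s_def by simp
  have tgt: "h0 \<otimes> s \<otimes> k \<in> {y \<in> carrier G. inv g \<otimes> y \<in> H}" if k: "k \<in> H" for k
  proof -
    have "inv g \<otimes> (h0 \<otimes> s \<otimes> k) = inv k0 \<otimes> k" using h0 s k by (simp add: inv_mult_group m_assoc)
    then show ?thesis using k h0 s by simp
  qed
  define T where "T = {t \<in> H. inv s \<otimes> t \<otimes> s \<in> H}"
  show ?thesis
  proof (cases "|K| \<le>o |T|")
    case True
    define c where "c = ch s"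
    have c: "c \<in> H" using ch_prop[OF s] c_def by simp
    define D where "D = (\<lambda>t. h0 \<otimes> t \<otimes> s \<otimes> c) ` T"
    have "D \<subseteq> {y \<in> carrier G. inv g \<otimes> y \<in> H}"
    proof
      fix y assume "y \<in> D"
      then obtain t where t: "t \<in> T" "y = h0 \<otimes> t \<otimes> s \<otimes> c" unfolding D_def by blast
      have tH: "t \<in> H" "inv s \<otimes> t \<otimes> s \<in> H" using t T_def by auto
      have "y = h0 \<otimes> s \<otimes> ((inv s \<otimes> t \<otimes> s) \<otimes> c)" using t tH h0 s c by (simp add: m_assoc)
      then show "y \<in> {y \<in> carrier G. inv g \<otimes> y \<in> H}" using tgt tH c by simp
    qed
    moreover have "D \<subseteq> HB"
    proof
      fix y assume "y \<in> D"
      then obtain t where t: "t \<in> T" "y = h0 \<otimes> t \<otimes> s \<otimes> c" unfolding D_def by blast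
      have tH: "t \<in> H" using t T_def by auto
      have "y = (h0 \<otimes> t \<otimes> inv c) \<otimes> rho s" unfolding rho_def rs c_def[symmetric]
        using t tH h0 s c by (simp add: m_assoc)
      moreover have "rho s \<in> BB" unfolding BB_def using s by simp
      ultimately show "y \<in> HB" using tH h0 c by (intro HBI[of "h0 \<otimes> t \<otimes> inv c" "rho s"]) simp_all
    qed
    moreover have "|T| \<le>o |D|"
    proof -
      have "inj_on (\<lambda>t. h0 \<otimes> t \<otimes> s \<otimes> c) T"
      proof (rule inj_onI)
        fix t t' assume tt: "t \<in> T" "t' \<in> T" "h0 \<otimes> t \<otimes> s \<otimes> c = h0 \<otimes> t' \<otimes> s \<otimes> c"
        have tc: "t \<in> carrier G" "t' \<in> carrier G" using tt T_def by auto
        have "t = inv h0 \<otimes> (h0 \<otimes> t \<otimes> s \<otimes> c) \<otimes> inv (s \<otimes> c)"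
          using tc h0 s c by (simp add: m_assoc inv_mult_group)
        also have "\<dots> = inv h0 \<otimes> (h0 \<otimes> t' \<otimes> s \<otimes> c) \<otimes> inv (s \<otimes> c)" using tt by simp
        also have "\<dots> = t'" using tc h0 s c by (simp add: m_assoc inv_mult_group)
        finally show "t = t'" .
      qed
      then show ?thesis unfolding card_of_ordLeq[symmetric] D_def by blast
    qed
    ultimately show ?thesis using ordLeq_transitive[OF True] by blast
  next
    case False
    then have Tl: "|T| <o |K|" using not_ordLeq_iff_ordLess[OF card_of_Well_order[of T] card_of_Well_order[of K]] by simp
    define Hs where "Hs = (\<lambda>h. ch (h \<otimes> s)) ` H"
    have reph: "rep (h \<otimes> s) = s" if "h \<in> H" for h
    proof -
      have "h \<otimes> s = h \<otimes> s \<otimes> \<one>" using that s by simp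
      then have "h \<otimes> s \<in> dc s" using that by (intro dcI[of h "\<one>"]) simp_all
      then show ?thesis using rep_eq[OF s] rs by simp
    qed
    have HsH: "c \<in> H" if c: "c \<in> Hs" for c
    proof -
      obtain h where "h \<in> H" "c = ch (h \<otimes> s)" using c unfolding Hs_def by blast
      then show ?thesis using ch_prop[of "h \<otimes> s"] s by simp
    qed
    define D where "D = (\<lambda>c. h0 \<otimes> s \<otimes> c) ` Hs"
    have "D \<subseteq> {y \<in> carrier G. inv g \<otimes> y \<in> H}" unfolding D_def using tgt HsH by (simp add: image_subset_iff)
    moreover have "D \<subseteq> HB"
    proof
      fix y assume "y \<in> D"
      then obtain h where h: "h \<in> H" "y = h0 \<otimes> s \<otimes> ch (h \<otimes> s)" unfolding D_def Hs_def by blast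
      define c where "c = ch (h \<otimes> s)"
      have c: "c \<in> H" using ch_prop[of "h \<otimes> s"] h s c_def by simp
      have "rho (h \<otimes> s) = c \<otimes> s \<otimes> c" unfolding rho_def c_def using reph h by simp
      then have "y = (h0 \<otimes> inv c) \<otimes> rho (h \<otimes> s)" using h c h0 s c_def by (simp add: m_assoc)
      moreover have "rho (h \<otimes> s) \<in> BB" unfolding BB_def using h s by simp
      ultimately show "y \<in> HB" using h0 c by (intro HBI[of "h0 \<otimes> inv c" "rho (h \<otimes> s)"]) simp_all
    qed
    moreover have "|Hs| \<le>o |D|"
    proof -
      have "inj_on (\<lambda>c. h0 \<otimes> s \<otimes> c) Hs"
      proof (rule inj_onI)
        fix c c' assume cc: "c \<in> Hs" "c' \<in> Hs" "h0 \<otimes> s \<otimes> c = h0 \<otimes> s \<otimes> c'"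
        have ccr: "c \<in> carrier G" "c' \<in> carrier G" using cc HsH by auto
        have "c = inv (h0 \<otimes> s) \<otimes> (h0 \<otimes> s \<otimes> c)" using ccr h0 s cl1[of "h0 \<otimes> s" c] by simp
        also have "\<dots> = inv (h0 \<otimes> s) \<otimes> (h0 \<otimes> s \<otimes> c')" using cc by simp
        also have "\<dots> = c'" using ccr h0 s cl1[of "h0 \<otimes> s" c'] by simp
        finally show "c = c'" .
      qed
      then show ?thesis unfolding card_of_ordLeq[symmetric] D_def by blast
    qed
    moreover have "|K| \<le>o |Hs|"
    proof (rule ccontr)
      assume "\<not> |K| \<le>o |Hs|"
      then have Hsl: "|Hs| <o |K|" using not_ordLeq_iff_ordLess[OF card_of_Well_order[of Hs] card_of_Well_order[of K]] by simp
      have "H \<subseteq> (\<lambda>p. fst p \<otimes> snd p) ` (Hs \<times> T)"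
      proof
        fix h assume h: "h \<in> H"
        define c where "c = ch (h \<otimes> s)"
        have c: "c \<in> H" "inv (c \<otimes> s) \<otimes> (h \<otimes> s) \<in> H"
          using ch_prop[of "h \<otimes> s"] h s reph[OF h] c_def by auto
        have cHs: "c \<in> Hs" unfolding Hs_def c_def using h by blast
        have "inv s \<otimes> (inv c \<otimes> h) \<otimes> s = inv (c \<otimes> s) \<otimes> (h \<otimes> s)"
          using c h s by (simp add: inv_mult_group m_assoc)
        then have "inv c \<otimes> h \<in> T" unfolding T_def using c h by simp
        moreover have "h = fst (c, inv c \<otimes> h) \<otimes> snd (c, inv c \<otimes> h)" using c h by simp
        ultimately show "h \<in> (\<lambda>p. fst p \<otimes> snd p) ` (Hs \<times> T)" using cHs by blast
      qed
      then have "|H| \<le>o |Hs \<times> T|" by (rule ordLeq_transitive[OF card_of_mono1 card_of_image])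
      moreover have "|Hs \<times> T| <o |K|" using times_less_inf2[OF K(1) Hsl Tl] .
      ultimately have "|H| <o |K|" by (rule ordLeq_ordLess_trans)
      then show False using K(2) not_ordLess_ordLeq by blast
    qed
    ultimately show ?thesis using ordLeq_transitive[of "|K|" "|Hs|" "|D|"] by blast
  qed
qed

lemma disj:
  assumes K: "infinite K" and I: "I \<subseteq> carrier G" "|I| <o |K|"
  shows "|entourage_I G I `` H \<inter> entourage_I G I `` BB| <o |K|"
proof -
  define J where "J = insert \<one> I"
  have J: "J \<subseteq> carrier G" using I J_def by auto
  define sel where "sel i j = (SOME b. b \<in> BB \<and> inv (inv j \<otimes> i) \<otimes> b \<in> H)" for i j
  have sub: "entourage_I G I `` H \<inter> entourage_I G I `` BB \<subseteq> (\<lambda>p. snd p \<otimes> sel (fst p) (snd p)) ` (J \<times> J)"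
  proof
    fix y assume y: "y \<in> entourage_I G I `` H \<inter> entourage_I G I `` BB"
    obtain i x where ix: "i \<in> J" "x \<in> H" "y = i \<otimes> x"
    proof -
      from y obtain x where x: "x \<in> H" "(x, y) \<in> entourage_I G I" by blast
      then have "y = x \<or> (\<exists>i\<in>I. y = i \<otimes> x)" unfolding entourage_I_def by simp
      then show ?thesis
      proof
        assume "y = x" then show ?thesis using that[of \<one> x] x J_def by simp
      next
        assume "\<exists>i\<in>I. y = i \<otimes> x" then show ?thesis using that x J_def by blast
      qed
    qed
    obtain j b where jb: "j \<in> J" "b \<in> BB" "y = j \<otimes> b"
    proof -
      from y obtain b where b: "b \<in> BB" "(b, y) \<in> entourage_I G I" by blast
      have bc: "b \<in> carrier G" using b BB_carrier by blast
      from b have "y = b \<or> (\<exists>i\<in>I. y = i \<otimes> b)" unfolding entourage_I_def by simp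
      then show ?thesis
      proof
        assume "y = b" then show ?thesis using that[of \<one> b] b bc J_def by simp
      next
        assume "\<exists>i\<in>I. y = i \<otimes> b" then show ?thesis using that b J_def by blast
      qed
    qed
    have ic: "i \<in> carrier G" "j \<in> carrier G" using ix jb J by auto
    have xc: "x \<in> carrier G" "b \<in> carrier G" using ix jb BB_carrier by auto
    define a where "a = inv (inv j \<otimes> i)"
    have ac: "a \<in> carrier G" using ic a_def by simp
    have "a \<otimes> b = inv i \<otimes> (j \<otimes> b)" using ic xc a_def by (simp add: inv_mult_group m_assoc)
    also have "\<dots> = inv i \<otimes> (i \<otimes> x)" using ix jb by simp
    also have "\<dots> = x" using ic xc by simp
    finally have ab: "a \<otimes> b \<in> H" using ix by simp
    then have "\<exists>b. b \<in> BB \<and> inv (inv j \<otimes> i) \<otimes> b \<in> H" using jb a_def by blast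
    then have sl: "sel i j \<in> BB \<and> a \<otimes> sel i j \<in> H" unfolding sel_def a_def by (rule someI_ex)
    have "inv b \<otimes> sel i j \<in> H"
      using trans_mem[OF ac xc(2) _ ab] sl BB_carrier by blast
    then have "b = sel i j" using transv jb sl by blast
    then show "y \<in> (\<lambda>p. snd p \<otimes> sel (fst p) (snd p)) ` (J \<times> J)"
      using jb ix by force
  qed
  have "|J| <o |K|"
  proof -
    have one: "|{\<one>}| <o |K|" using fin_less_inf K by blast
    have u: "|{\<one>} \<union> I| <o |K|" by (rule card_of_Un_ordLess_infinite[OF K one I(2)])
    show ?thesis unfolding J_def using u by simp
  qed
  then have "|J \<times> J| <o |K|" using times_less_inf K by blast
  then have "|(\<lambda>p. snd p \<otimes> sel (fst p) (snd p)) ` (J \<times> J)| <o |K|"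
    using card_of_image ordLeq_ordLess_trans by blast
  then show ?thesis using sub card_of_mono1 ordLeq_ordLess_trans by blast
qed

end

theorem theorem1p17:
  fixes G :: "('a, 'b) monoid_scheme" and K :: "'k set"
  assumes "group G"
    and "infinite K"
    and "(card_of K, card_of (carrier G)) \<in> ordLess"
  shows "\<not> normal_ballean (carrier G) (small_ent G K)"
proof
  assume N: "normal_ballean (carrier G) (small_ent G K)"
  interpret group G by fact
  have KG: "|K| <o |carrier G|" using assms(3) by simp
  obtain H where H: "subgroup H G" "|K| \<le>o |H|" "|H| \<le>o |K|"
    using exists_subgroup[OF assms(1,2) KG] by blast
  interpret S: dcs G H by (simp add: dcs_def dcs_axioms_def assms(1) H(1))
  have Hcar: "H \<subseteq> carrier G" using S.Hc by blast
  have adis: "asymp_disjoint (carrier G) (small_ent G K) H S.BB"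
    unfolding asymp_disjoint_def
  proof
    fix E assume "E \<in> small_ent G K"
    then obtain I where I: "E = entourage_I G I" "I \<subseteq> carrier G" "|I| <o |K|" unfolding small_ent_def by blast
    have sub: "E `` H \<inter> E `` S.BB \<subseteq> carrier G" unfolding I(1) entourage_I_def by auto
    show "bounded_in (carrier G) (small_ent G K) (E `` H \<inter> E `` S.BB)"
      using bounded_small[OF assms(1,2) sub] S.disj[OF assms(2) I(2,3)] I(1) by simp
  qed
  have "\<exists>U V. U \<subseteq> carrier G \<and> V \<subseteq> carrier G \<and> U \<inter> V = {} \<and>
    asymp_nbhd (carrier G) (small_ent G K) U H \<and> asymp_nbhd (carrier G) (small_ent G K) V S.BB"
    using N[unfolded normal_ballean_def, rule_format, OF Hcar S.BB_carrier adis] .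
  then obtain U V where UV: "U \<subseteq> carrier G" "V \<subseteq> carrier G" "U \<inter> V = {}"
    "asymp_nbhd (carrier G) (small_ent G K) U H" "asymp_nbhd (carrier G) (small_ent G K) V S.BB"
    by blast
  have Eg: "entourage_I G {g} \<in> small_ent G K" if "g \<in> carrier G" for g
    using ent_in[of "{g}" G K] that fin_less_inf[of "{g}" K] assms(2) by simp
  have Ug: "|{y \<in> carrier G. inv\<^bsub>G\<^esub> g \<otimes>\<^bsub>G\<^esub> y \<in> H} - U| <o |K|" if g: "g \<in> carrier G" for g
  proof -
    have "{y \<in> carrier G. inv\<^bsub>G\<^esub> g \<otimes>\<^bsub>G\<^esub> y \<in> H} \<subseteq> entourage_I G {g} `` H"
    proof
      fix y assume y: "y \<in> {y \<in> carrier G. inv\<^bsub>G\<^esub> g \<otimes>\<^bsub>G\<^esub> y \<in> H}"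
      then have "(inv\<^bsub>G\<^esub> g \<otimes>\<^bsub>G\<^esub> y, y) \<in> entourage_I G {g}" unfolding entourage_I_def using g by simp
      then show "y \<in> entourage_I G {g} `` H" using y by blast
    qed
    then have sub: "{y \<in> carrier G. inv\<^bsub>G\<^esub> g \<otimes>\<^bsub>G\<^esub> y \<in> H} - U \<subseteq> entourage_I G {g} `` H - U" by blast
    have "bounded_in (carrier G) (small_ent G K) (entourage_I G {g} `` H - U)"
      using UV(4) Eg[OF g] unfolding asymp_nbhd_def by blast
    then have lt: "|entourage_I G {g} `` H - U| <o |K|" by (rule small_bounded[OF assms(1,2)])
    show ?thesis by (rule ordLeq_ordLess_trans[OF card_of_mono1[OF sub] lt])
  qed
  have Vh: "|(\<lambda>b. h \<otimes>\<^bsub>G\<^esub> b) ` S.BB - V| <o |K|" if h: "h \<in> H" for h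
  proof -
    have hc: "h \<in> carrier G" using h by simp
    have "(\<lambda>b. h \<otimes>\<^bsub>G\<^esub> b) ` S.BB \<subseteq> entourage_I G {h} `` S.BB"
    proof
      fix y assume "y \<in> (\<lambda>b. h \<otimes>\<^bsub>G\<^esub> b) ` S.BB"
      then obtain b where b: "b \<in> S.BB" "y = h \<otimes>\<^bsub>G\<^esub> b" by blast
      have "b \<in> carrier G" using b S.BB_carrier by blast
      then have "(b, y) \<in> entourage_I G {h}" unfolding entourage_I_def using hc b by simp
      then show "y \<in> entourage_I G {h} `` S.BB" using b by blast
    qed
    then have sub: "(\<lambda>b. h \<otimes>\<^bsub>G\<^esub> b) ` S.BB - V \<subseteq> entourage_I G {h} `` S.BB - V" by blast
    have "bounded_in (carrier G) (small_ent G K) (entourage_I G {h} `` S.BB - V)"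
      using UV(5) Eg[OF hc] unfolding asymp_nbhd_def by blast
    then have lt: "|entourage_I G {h} `` S.BB - V| <o |K|" by (rule small_bounded[OF assms(1,2)])
    show ?thesis by (rule ordLeq_ordLess_trans[OF card_of_mono1[OF sub] lt])
  qed
  define W where "W = (\<Union>h\<in>H. (\<lambda>b. h \<otimes>\<^bsub>G\<^esub> b) ` S.BB - V)"
  have Wc: "W \<subseteq> carrier G" unfolding W_def using S.BB_carrier by auto
  have W: "|W| \<le>o |K|" unfolding W_def
  proof (rule card_of_UNION_ordLeq_infinite[OF assms(2) H(3)], intro ballI)
    fix h assume "h \<in> H"
    then show "|(\<lambda>b. h \<otimes>\<^bsub>G\<^esub> b) ` S.BB - V| \<le>o |K|" by (rule ordLess_imp_ordLeq[OF Vh])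
  qed
  have cover: "\<exists>w\<in>W. inv\<^bsub>G\<^esub> g \<otimes>\<^bsub>G\<^esub> w \<in> H" if g: "g \<in> carrier G" for g
  proof (rule ccontr)
    assume nw: "\<not> (\<exists>w\<in>W. inv\<^bsub>G\<^esub> g \<otimes>\<^bsub>G\<^esub> w \<in> H)"
    obtain D where D: "D \<subseteq> {y \<in> carrier G. inv\<^bsub>G\<^esub> g \<otimes>\<^bsub>G\<^esub> y \<in> H}" "D \<subseteq> S.HB" "|K| \<le>o |D|"
      using S.big_D[OF assms(2) H(2) g] by blast
    have DV: "D \<subseteq> V"
    proof
      fix d assume d: "d \<in> D"
      then obtain h b where hb: "h \<in> H" "b \<in> S.BB" "d = h \<otimes>\<^bsub>G\<^esub> b" using D(2) unfolding S.HB_def by blast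
      have dW: "d \<notin> W" using nw d D(1) by blast
      show "d \<in> V"
      proof (rule ccontr)
        assume "d \<notin> V"
        then have "d \<in> (\<lambda>b. h \<otimes>\<^bsub>G\<^esub> b) ` S.BB - V" using hb by blast
        then have "d \<in> W" unfolding W_def using hb(1) by blast
        then show False using dW by simp
      qed
    qed
    have "D \<subseteq> {y \<in> carrier G. inv\<^bsub>G\<^esub> g \<otimes>\<^bsub>G\<^esub> y \<in> H} - U" using D(1) DV UV(3) by blast
    then have "|D| <o |K|" by (rule ordLeq_ordLess_trans[OF card_of_mono1 Ug[OF g]])
    then show False using D(3) not_ordLess_ordLeq by blast
  qed
  have "carrier G \<subseteq> (\<lambda>p. fst p \<otimes>\<^bsub>G\<^esub> inv\<^bsub>G\<^esub> (snd p)) ` (W \<times> H)"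
  proof
    fix g assume g: "g \<in> carrier G"
    obtain w where w: "w \<in> W" "inv\<^bsub>G\<^esub> g \<otimes>\<^bsub>G\<^esub> w \<in> H" using cover[OF g] by blast
    have wc: "w \<in> carrier G" using w Wc by blast
    have "g = w \<otimes>\<^bsub>G\<^esub> inv\<^bsub>G\<^esub> (inv\<^bsub>G\<^esub> g \<otimes>\<^bsub>G\<^esub> w)" using g wc by (simp add: inv_mult_group)
    then show "g \<in> (\<lambda>p. fst p \<otimes>\<^bsub>G\<^esub> inv\<^bsub>G\<^esub> (snd p)) ` (W \<times> H)" using w by force
  qed
  then have "|carrier G| \<le>o |W \<times> H|" by (rule ordLeq_transitive[OF card_of_mono1 card_of_image])
  moreover have "|W \<times> H| \<le>o |K|" by (rule times_leq_inf[OF assms(2) W H(3)])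
  ultimately have "|carrier G| \<le>o |K|" by (rule ordLeq_transitive)
  then show False using KG not_ordLess_ordLeq by blast
qed

end
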